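(* Let $(X,\to,d_A)$ be a metric transition system over $A$. For every $d\in\mathit{DPMet}(X)$ and $x,y\in X$, \[\beta_S(d)(x,y)=\bigvee_{(a,x')\in\delta(x)}\ \bigwedge_{(b,y')\in\delta(y)}\max\{d_A(a,b),d(x',y')\},\] i.e. $\beta_S(d)=(d_A\otimes d)_{\overrightarrow H}\circ(\delta\times\delta)$. Moreover, if the transition system is finitely branching, $\beta_S$ is continuous.
   Context: A metric transition system over $A$ is $(X,\to,d_A)$ with $\to\subseteq X\times A\times X$ and a metric $d_A\colon A\times A\to[0,1]$; $\delta(x)=\{(a,x')\mid x\xrightarrow{a}x'\}$; finitely branching means every $\delta(x)$ is finite. $r\oplus s=\min\{r+s,1\}$, $r\ominus s=\max\{0,r-s\}$; $\bigvee\emptyset=0$, $\bigwedge\emptyset=1$. $\mathit{DPMet}(X)$: directed pseudo-metrics on $X$ ($d(x,x)=0$, $d(x,z)\le d(x,y)\oplus d(y,z)$, values in $[0,1]$), ordered pointwise. $\alpha_S(\mathcal F)(x_1,x_2)=\bigvee_{f\in\mathcal F}(f(x_1)\ominus f(x_2))$ for $\mathcal F\subseteq[0,1]^X$; $\gamma_S(d)=\{f\in[0,1]^X\mid\forall x_1,x_2\colon f(x_1)\ominus f(x_2)\le d(x_1,x_2)\}$. $\bigcirc_cf(x)=\bigvee\{(1-d_A(b,c))\land f(x')\mid x\xrightarrow{b}x'\}$. $\mathit{lo}_S(\mathcal F)=\bigcup_{c\in A}\{\bigcirc_cf\mid f\in\mathrm{cl}^{\land,\mathrm{sh}}_f(\mathcal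 F)\}$, where $\mathrm{cl}^{\land,\mathrm{sh}}_f(\mathcal F)$ is the closure of $\mathcal F$ under finite meets (pointwise minimum, the empty meet being the constant 1) and constant shifts $f\mapsto f\ominus r$, $f\mapsto f\oplus r$ ($r\in[0,1]$). $\beta_S=\alpha_S\circ\mathit{lo}_S\circ\gamma_S$. Continuous means preserving suprema of well-ordered chains. *)

theory Defs
  imports Main "HOL.Real"
begin

definition oplus01 :: "real \<Rightarrow> real \<Rightarrow> real" where
  "oplus01 r s = min (r + s) 1"

definition ominus01 :: "real \<Rightarrow> real \<Rightarrow> real" where
  "ominus01 r s = max 0 (r - s)"

definition sup01 :: "real set \<Rightarrow> real" where
  "sup01 S = (if S = {} then 0 else Sup S)"

definition inf01 :: "real set \<Rightarrow> real" where
  "inf01 S = (if S = {} then 1 else Inf S)"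

definition metric01 :: "('a \<Rightarrow> 'a \<Rightarrow> real) \<Rightarrow> bool" where
  "metric01 dA \<longleftrightarrow>
     (\<forall>a b. 0 \<le> dA a b \<and> dA a b \<le> 1) \<and>
     (\<forall>a b. dA a b = 0 \<longleftrightarrow> a = b) \<and>
     (\<forall>a b. dA a b = dA b a) \<and>
     (\<forall>a b c. dA a c \<le> dA a b + dA b c)"

definition delta :: "('x \<times> 'a \<times> 'x) set \<Rightarrow> 'x \<Rightarrow> ('a \<times> 'x) set" where
  "delta T x = {(a, x'). (x, a, x') \<in> T}"

definition finitely_branching :: "('x \<times> 'a \<times> 'x) set \<Rightarrow> bool" where
  "finitely_branching T \<longleftrightarrow> (\<forall>x. finite (delta T x))"

definition DPMet :: "('x \<Rightarrow> 'x \<Rightarrow> real) set" where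
  "DPMet = {d. (\<forall>x y. 0 \<le> d x y \<and> d x y \<le> 1) \<and>
               (\<forall>x. d x x = 0) \<and>
               (\<forall>x y z. d x z \<le> oplus01 (d x y) (d y z))}"

definition alphaS :: "('x \<Rightarrow> real) set \<Rightarrow> 'x \<Rightarrow> 'x \<Rightarrow> real" where
  "alphaS F x1 x2 = sup01 {ominus01 (f x1) (f x2) | f. f \<in> F}"

definition gammaS :: "('x \<Rightarrow> 'x \<Rightarrow> real) \<Rightarrow> ('x \<Rightarrow> real) set" where
  "gammaS d = {f. (\<forall>x. 0 \<le> f x \<and> f x \<le> 1) \<and>
                  (\<forall>x1 x2. ominus01 (f x1) (f x2) \<le> d x1 x2)}"

definition nextop :: "('x \<times> 'a \<times> 'x) set \<Rightarrow> ('a \<Rightarrow> 'a \<Rightarrow> real) \<Rightarrow> 'a \<Rightarrow> ('x \<Rightarrow> real) \<Rightarrow> 'x \<Rightarrow> real" where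
  "nextop T dA c f x = sup01 {min (1 - dA b c) (f x') | b x'. (x, b, x') \<in> T}"

text \<open>Closure under finite meets (binary meets plus the empty meet, the constant 1)
  and constant shifts by r in [0,1].\<close>
inductive_set cl_meet_shift :: "('x \<Rightarrow> real) set \<Rightarrow> ('x \<Rightarrow> real) set" for F where
  base: "f \<in> F \<Longrightarrow> f \<in> cl_meet_shift F"
| top: "(\<lambda>_. 1) \<in> cl_meet_shift F"
| meet: "f \<in> cl_meet_shift F \<Longrightarrow> g \<in> cl_meet_shift F \<Longrightarrow> (\<lambda>x. min (f x) (g x)) \<in> cl_meet_shift F"
| shift_down: "f \<in> cl_meet_shift F \<Longrightarrow> 0 \<le> r \<Longrightarrow> r \<le> 1 \<Longrightarrow> (\<lambda>x. ominus01 (f x) r) \<in> cl_meet_shift F"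
| shift_up: "f \<in> cl_meet_shift F \<Longrightarrow> 0 \<le> r \<Longrightarrow> r \<le> 1 \<Longrightarrow> (\<lambda>x. oplus01 (f x) r) \<in> cl_meet_shift F"

definition loS :: "('x \<times> 'a \<times> 'x) set \<Rightarrow> ('a \<Rightarrow> 'a \<Rightarrow> real) \<Rightarrow> ('x \<Rightarrow> real) set \<Rightarrow> ('x \<Rightarrow> real) set" where
  "loS T dA F = {nextop T dA c f | c f. f \<in> cl_meet_shift F}"

definition betaS :: "('x \<times> 'a \<times> 'x) set \<Rightarrow> ('a \<Rightarrow> 'a \<Rightarrow> real) \<Rightarrow> ('x \<Rightarrow> 'x \<Rightarrow> real) \<Rightarrow> 'x \<Rightarrow> 'x \<Rightarrow> real" where
  "betaS T dA d = alphaS (loS T dA (gammaS d))"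

definition is_lub_in :: "('x \<Rightarrow> 'x \<Rightarrow> real) set \<Rightarrow> ('x \<Rightarrow> 'x \<Rightarrow> real) set \<Rightarrow> ('x \<Rightarrow> 'x \<Rightarrow> real) \<Rightarrow> bool" where
  "is_lub_in P D s \<longleftrightarrow> s \<in> P \<and> (\<forall>d\<in>D. d \<le> s) \<and> (\<forall>u\<in>P. (\<forall>d\<in>D. d \<le> u) \<longrightarrow> s \<le> u)"

definition well_ordered_chain :: "('x \<Rightarrow> 'x \<Rightarrow> real) set \<Rightarrow> bool" where
  "well_ordered_chain D \<longleftrightarrow>
     (\<forall>d1\<in>D. \<forall>d2\<in>D. d1 \<le> d2 \<or> d2 \<le> d1) \<and>
     (\<forall>E. E \<subseteq> D \<and> E \<noteq> {} \<longrightarrow> (\<exists>e\<in>E. \<forall>e'\<in>E. e \<le> e'))"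

definition continuous_DPMet :: "(('x \<Rightarrow> 'x \<Rightarrow> real) \<Rightarrow> ('x \<Rightarrow> 'x \<Rightarrow> real)) \<Rightarrow> bool" where
  "continuous_DPMet \<Phi> \<longleftrightarrow>
     (\<forall>D s. D \<noteq> {} \<and> D \<subseteq> DPMet \<and> well_ordered_chain D \<and> is_lub_in DPMet D s
        \<longrightarrow> is_lub_in DPMet (\<Phi> ` D) (\<Phi> s))"

end

theory Submission
  imports Defs
begin

lemma sup01_le: "(\<And>t. t \<in> S \<Longrightarrow> t \<le> c) \<Longrightarrow> 0 \<le> c \<Longrightarrow> sup01 S \<le> c"
  unfolding sup01_def by (auto intro: cSup_least)

lemma sup01_ge: "t \<in> S \<Longrightarrow> (\<And>t. t \<in> S \<Longrightarrow> t \<le> B) \<Longrightarrow> t \<le> sup01 S"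
  unfolding sup01_def by (auto intro!: cSup_upper bdd_aboveI)

lemma sup01_nonneg: "(\<And>t. t \<in> S \<Longrightarrow> 0 \<le> t) \<Longrightarrow> (\<And>t. t \<in> S \<Longrightarrow> t \<le> B) \<Longrightarrow> 0 \<le> sup01 S"
proof (cases "S = {}")
  case True thus ?thesis by (simp add: sup01_def)
next
  case False
  assume a: "\<And>t. t \<in> S \<Longrightarrow> 0 \<le> t" "\<And>t. t \<in> S \<Longrightarrow> t \<le> B"
  then obtain t where "t \<in> S" using False by auto
  thus ?thesis using a sup01_ge[of t S B] by force
qed

lemma inf01_ge: "(\<And>t. t \<in> S \<Longrightarrow> c \<le> t) \<Longrightarrow> c \<le> 1 \<Longrightarrow> c \<le> inf01 S"
  unfolding inf01_def by (auto intro: cInf_greatest)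

lemma inf01_le: "t \<in> S \<Longrightarrow> (\<And>t. t \<in> S \<Longrightarrow> B \<le> t) \<Longrightarrow> inf01 S \<le> t"
  unfolding inf01_def by (auto intro!: cInf_lower bdd_belowI)

lemma inf01_le1: "(\<And>t. t \<in> S \<Longrightarrow> t \<le> 1) \<Longrightarrow> (\<And>t. t \<in> S \<Longrightarrow> B \<le> t) \<Longrightarrow> inf01 S \<le> 1"
proof (cases "S = {}")
  case True thus ?thesis by (simp add: inf01_def)
next
  case False
  assume a: "\<And>t. t \<in> S \<Longrightarrow> t \<le> 1" "\<And>t. t \<in> S \<Longrightarrow> B \<le> t"
  then obtain t where "t \<in> S" using False by auto
  thus ?thesis using a inf01_le[of t S B] by force
qed

lemma cl_gamma:
  assumes "\<forall>x y. 0 \<le> d x y" "f \<in> cl_meet_shift (gammaS d)"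
  shows "f \<in> gammaS d"
  using assms(2)
proof induction
  case (base f) thus ?case .
next
  case top thus ?case using assms(1) by (simp add: gammaS_def ominus01_def)
next
  case (meet f g)
  thus ?case unfolding gammaS_def ominus01_def
    by (auto simp: min_def max_def) (smt (verit))+
next
  case (shift_down f r)
  thus ?case unfolding gammaS_def ominus01_def
    by (auto simp: min_def max_def) (smt (verit))+
next
  case (shift_up f r)
  thus ?case unfolding gammaS_def ominus01_def oplus01_def
    by (auto simp: min_def max_def) (smt (verit))+
qed


lemma nextop_bounds:
  assumes "metric01 dA" "\<forall>z. 0 \<le> f z \<and> f z \<le> 1"
  shows "0 \<le> nextop T dA c f x \<and> nextop T dA c f x \<le> 1"
proof -
  have b: "0 \<le> t \<and> t \<le> 1" if tin: "t \<in> {min (1 - dA b c) (f x') | b x'. (x, b, x') \<in> T}" for t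
  proof -
    obtain b x' where t: "t = min (1 - dA b c) (f x')" using tin by auto
    have "0 \<le> dA b c" "dA b c \<le> 1" using assms(1) unfolding metric01_def by auto
    moreover have "0 \<le> f x'" "f x' \<le> 1" using assms(2) by auto
    ultimately show ?thesis unfolding t by simp
  qed
  have "0 \<le> sup01 {min (1 - dA b c) (f x') | b x'. (x, b, x') \<in> T}"
    by (rule sup01_nonneg[of _ 1]) (use b in auto)
  moreover have "sup01 {min (1 - dA b c) (f x') | b x'. (x, b, x') \<in> T} \<le> 1"
    by (rule sup01_le) (use b in auto)
  ultimately show ?thesis unfolding nextop_def by simp
qed

lemma loS_bounds:
  assumes "metric01 dA" "\<forall>x y. 0 \<le> d x y" "g \<in> loS T dA (gammaS d)"
  shows "0 \<le> g z \<and> g z \<le> 1"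
proof -
  obtain c f where g: "g = nextop T dA c f" "f \<in> cl_meet_shift (gammaS d)"
    using assms(3) unfolding loS_def by blast
  have "f \<in> gammaS d" by (rule cl_gamma[OF assms(2) g(2)])
  hence "\<forall>z. 0 \<le> f z \<and> f z \<le> 1" unfolding gammaS_def by blast
  from nextop_bounds[OF assms(1) this] show ?thesis unfolding g(1) .
qed

definition HH :: "('x \<times> 'a \<times> 'x) set \<Rightarrow> ('a \<Rightarrow> 'a \<Rightarrow> real) \<Rightarrow> ('x \<Rightarrow> 'x \<Rightarrow> real) \<Rightarrow> 'x \<Rightarrow> 'x \<Rightarrow> real" where
  "HH T dA d x y = sup01 {inf01 {max (dA a b) (d x' y') | b y'. (b, y') \<in> delta T y}
                     | a x'. (a, x') \<in> delta T x}"

lemma II_bounds: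
  assumes "metric01 dA" "\<forall>x y. 0 \<le> d x y \<and> d x y \<le> 1"
  shows "0 \<le> inf01 {max (dA a b) (d x' y') | b y'. (b, y') \<in> delta T y}
     \<and> inf01 {max (dA a b) (d x' y') | b y'. (b, y') \<in> delta T y} \<le> 1"
proof -
  have b: "\<And>t. t \<in> {max (dA a b) (d x' y') | b y'. (b, y') \<in> delta T y} \<Longrightarrow> 0 \<le> t \<and> t \<le> 1"
  proof -
    fix t assume "t \<in> {max (dA a b) (d x' y') | b y'. (b, y') \<in> delta T y}"
    then obtain b y' where t: "t = max (dA a b) (d x' y')" by auto
    have "0 \<le> dA a b" "dA a b \<le> 1" using assms(1) unfolding metric01_def by auto
    thus "0 \<le> t \<and> t \<le> 1" using assms(2) t by auto
  qed
  have "0 \<le> inf01 {max (dA a b) (d x' y') | b y'. (b, y') \<in> delta T y}"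
    by (rule inf01_ge) (use b in auto)
  moreover have "inf01 {max (dA a b) (d x' y') | b y'. (b, y') \<in> delta T y} \<le> 1"
    by (rule inf01_le1[of _ 0]) (use b in auto)
  ultimately show ?thesis by simp
qed

lemma HH_bounds:
  assumes "metric01 dA" "\<forall>x y. 0 \<le> d x y \<and> d x y \<le> 1"
  shows "0 \<le> HH T dA d x y \<and> HH T dA d x y \<le> 1"
proof -
  have b: "\<And>t. t \<in> {inf01 {max (dA a b) (d x' y') | b y'. (b, y') \<in> delta T y}
                     | a x'. (a, x') \<in> delta T x} \<Longrightarrow> 0 \<le> t \<and> t \<le> 1"
    using II_bounds[OF assms] by auto
  have "0 \<le> sup01 {inf01 {max (dA a b) (d x' y') | b y'. (b, y') \<in> delta T y}
                     | a x'. (a, x') \<in> delta T x}"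
    by (rule sup01_nonneg[of _ 1]) (use b in auto)
  moreover have "sup01 {inf01 {max (dA a b) (d x' y') | b y'. (b, y') \<in> delta T y}
                     | a x'. (a, x') \<in> delta T x} \<le> 1"
    by (rule sup01_le) (use b in auto)
  ultimately show ?thesis unfolding HH_def by simp
qed

lemma beta_le_HH:
  assumes dA: "metric01 dA" and d: "\<forall>x y. 0 \<le> d x y \<and> d x y \<le> 1"
  shows "betaS T dA d x y \<le> HH T dA d x y"
proof -
  have H0: "0 \<le> HH T dA d x y" using HH_bounds[OF dA d] by blast
  have d0: "\<forall>x y. 0 \<le> d x y" using d by blast
  have dAf: "\<And>a b. 0 \<le> dA a b \<and> dA a b \<le> 1" "\<And>a b. dA a b = dA b a"
    "\<And>a b c. dA a c \<le> dA a b + dA b c" using dA unfolding metric01_def by blast+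
  show ?thesis unfolding betaS_def alphaS_def
  proof (rule sup01_le[OF _ H0])
    fix t assume "t \<in> {ominus01 (g x) (g y) |g. g \<in> loS T dA (gammaS d)}"
    then obtain c f where t: "t = ominus01 (nextop T dA c f x) (nextop T dA c f y)"
      and f: "f \<in> cl_meet_shift (gammaS d)" unfolding loS_def by blast
    have fg: "f \<in> gammaS d" by (rule cl_gamma[OF d0 f])
    hence fb: "\<forall>z. 0 \<le> f z \<and> f z \<le> 1" and fd: "\<And>z1 z2. ominus01 (f z1) (f z2) \<le> d z1 z2"
      unfolding gammaS_def by blast+
    define Ny where "Ny = nextop T dA c f y"
    have Nyb: "0 \<le> Ny \<and> Ny \<le> 1" unfolding Ny_def by (rule nextop_bounds[OF dA fb])
    have "nextop T dA c f x \<le> Ny + HH T dA d x y"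
      unfolding nextop_def
    proof (rule sup01_le)
      show "0 \<le> Ny + HH T dA d x y" using Nyb H0 by simp
      fix s assume "s \<in> {min (1 - dA b c) (f x') |b x'. (x, b, x') \<in> T}"
      then obtain a x' where s: "s = min (1 - dA a c) (f x')" and ax: "(x, a, x') \<in> T" by blast
      define I where "I = inf01 {max (dA a b) (d x' y') | b y'. (b, y') \<in> delta T y}"
      have "I \<le> HH T dA d x y" unfolding HH_def
      proof (rule sup01_ge[of _ _ 1])
        show "I \<in> {inf01 {max (dA a b) (d x' y') | b y'. (b, y') \<in> delta T y}
                     | a x'. (a, x') \<in> delta T x}" unfolding I_def using ax by (auto simp: delta_def)
        fix t assume "t \<in> {inf01 {max (dA a b) (d x' y') | b y'. (b, y') \<in> delta T y}
                     | a x'. (a, x') \<in> delta T x}"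
        then obtain a' x'' where "t = inf01 {max (dA a' b) (d x'' y') | b y'. (b, y') \<in> delta T y}"
          by blast
        thus "t \<le> 1" using II_bounds[OF dA d, where T=T and y=y and a=a' and x'=x''] by simp
      qed
      moreover have "s - Ny \<le> I" unfolding I_def
      proof (rule inf01_ge)
        have "f x' \<le> 1" using fb by blast
        thus "s - Ny \<le> 1" using s Nyb by (simp add: min_def)
        fix u assume "u \<in> {max (dA a b) (d x' y') | b y'. (b, y') \<in> delta T y}"
        then obtain b y' where u: "u = max (dA a b) (d x' y')" and yb: "(y, b, y') \<in> T"
          unfolding delta_def by blast
        have "min (1 - dA b c) (f y') \<le> Ny" unfolding Ny_def nextop_def
        proof (rule sup01_ge[of _ _ 1])
          show "min (1 - dA b c) (f y') \<in> {min (1 - dA b' c) (f x') |b' x'. (y, b', x') \<in> T}"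
            using yb by blast
          fix t assume "t \<in> {min (1 - dA b' c) (f x') |b' x'. (y, b', x') \<in> T}"
          then obtain b' x'' where "t = min (1 - dA b' c) (f x'')" by blast
          thus "t \<le> 1" using dAf(1)[of b' c] by (simp add: min_le_iff_disj)
        qed
        moreover have "dA b c \<le> dA b a + dA a c" "dA a b = dA b a"
          using dAf by blast+
        moreover have "f x' - f y' \<le> d x' y'" using fd[of x' y'] unfolding ominus01_def by simp
        moreover have "min p q - min p' q' \<le> max (p - p') (q - q')" for p q p' q' :: real
          by (simp add: min_def max_def)
        ultimately show "s - Ny \<le> u" unfolding s u
          by (smt (verit, best))
      qed
      ultimately show "s \<le> Ny + HH T dA d x y" by linarith
    qed
    thus "t \<le> HH T dA d x y" unfolding t Ny_def ominus01_def using H0 by simp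
  qed
qed

lemma beta_bounds:
  assumes dA: "metric01 dA" and d0: "\<forall>x y. 0 \<le> d x y"
  shows "0 \<le> betaS T dA d x y \<and> betaS T dA d x y \<le> 1"
proof -
  have b: "0 \<le> t \<and> t \<le> 1" if tin: "t \<in> {ominus01 (g x) (g y) |g. g \<in> loS T dA (gammaS d)}" for t
  proof -
    obtain g where t: "t = ominus01 (g x) (g y)" and g: "g \<in> loS T dA (gammaS d)" using tin by blast
    have "0 \<le> g x \<and> g x \<le> 1" "0 \<le> g y \<and> g y \<le> 1" using loS_bounds[OF dA d0 g] by blast+
    thus ?thesis unfolding t ominus01_def by simp
  qed
  have "0 \<le> sup01 {ominus01 (g x) (g y) |g. g \<in> loS T dA (gammaS d)}"
    by (rule sup01_nonneg[of _ 1]) (use b in auto)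
  moreover have "sup01 {ominus01 (g x) (g y) |g. g \<in> loS T dA (gammaS d)} \<le> 1"
    by (rule sup01_le) (use b in auto)
  ultimately show ?thesis unfolding betaS_def alphaS_def by simp
qed

lemma HH_le_beta:
  assumes dA: "metric01 dA" and d: "d \<in> DPMet"
  shows "HH T dA d x y \<le> betaS T dA d x y"
proof -
  have db: "\<forall>x y. 0 \<le> d x y \<and> d x y \<le> 1" and dz: "\<And>x. d x x = 0"
    and dt: "\<And>x y z. d x z \<le> oplus01 (d x y) (d y z)" using d unfolding DPMet_def by blast+
  have d0: "\<forall>x y. 0 \<le> d x y" using db by blast
  have dAf: "\<And>a b. 0 \<le> dA a b \<and> dA a b \<le> 1" "\<And>a b. dA a b = dA b a"
    "\<And>a. dA a a = 0" using dA unfolding metric01_def by blast+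
  have B0: "0 \<le> betaS T dA d x y" using beta_bounds[OF dA d0] by blast
  show ?thesis unfolding HH_def
  proof (rule sup01_le[OF _ B0])
    fix t assume "t \<in> {inf01 {max (dA a b) (d x' y') | b y'. (b, y') \<in> delta T y}
                     | a x'. (a, x') \<in> delta T x}"
    then obtain a x' where t: "t = inf01 {max (dA a b) (d x' y') | b y'. (b, y') \<in> delta T y}"
      and ax: "(x, a, x') \<in> T" unfolding delta_def by blast
    have t1: "0 \<le> t \<and> t \<le> 1" unfolding t by (rule II_bounds[OF dA db])
    define f where "f = (\<lambda>z. 1 - d x' z)"
    have fg: "f \<in> gammaS d" unfolding gammaS_def
    proof (intro CollectI conjI allI)
      fix z show "0 \<le> f z" "f z \<le> 1" unfolding f_def using db by auto
    next
      fix z1 z2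
      have "d x' z2 \<le> d x' z1 + d z1 z2" using dt[where x=x' and y=z1 and z=z2] unfolding oplus01_def by simp
      thus "ominus01 (f z1) (f z2) \<le> d z1 z2" unfolding f_def ominus01_def using db by simp
    qed
    define g where "g = nextop T dA a f"
    have gl: "g \<in> loS T dA (gammaS d)" unfolding g_def loS_def
      using cl_meet_shift.base[OF fg] by blast
    have gx: "1 \<le> g x" unfolding g_def nextop_def
    proof -
      have "min (1 - dA a a) (f x') \<le> sup01 {min (1 - dA b a) (f x') |b x'. (x, b, x') \<in> T}"
      proof (rule sup01_ge[of _ _ 1])
        show "min (1 - dA a a) (f x') \<in> {min (1 - dA b a) (f x') |b x'. (x, b, x') \<in> T}"
          using ax by blast
        fix t assume "t \<in> {min (1 - dA b a) (f x') |b x'. (x, b, x') \<in> T}"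
        then obtain b' x'' where "t = min (1 - dA b' a) (f x'')" by blast
        thus "t \<le> 1" using dAf(1)[of b' a] by (simp add: min_le_iff_disj)
      qed
      moreover have "min (1 - dA a a) (f x') = 1" unfolding f_def using dAf(3) dz by simp
      ultimately show "1 \<le> sup01 {min (1 - dA b a) (f x') |b x'. (x, b, x') \<in> T}" by simp
    qed
    have gy: "g y \<le> 1 - t" unfolding g_def nextop_def
    proof (rule sup01_le)
      show "0 \<le> 1 - t" using t1 by simp
      fix s assume "s \<in> {min (1 - dA b a) (f x') |b x'. (y, b, x') \<in> T}"
      then obtain b y' where s: "s = min (1 - dA b a) (f y')" and yb: "(y, b, y') \<in> T" by blast
      have "t \<le> max (dA a b) (d x' y')" unfolding t
      proof (rule inf01_le[of _ _ 0])
        show "max (dA a b) (d x' y') \<in> {max (dA a b) (d x' y') | b y'. (b, y') \<in> delta T y}"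
          using yb unfolding delta_def by blast
        fix u assume "u \<in> {max (dA a b) (d x' y') | b y'. (b, y') \<in> delta T y}"
        then obtain b' y'' where "u = max (dA a b') (d x' y'')" by blast
        thus "0 \<le> u" using dAf(1)[of a b'] by (simp add: le_max_iff_disj)
      qed
      thus "s \<le> 1 - t" unfolding s f_def using dAf(2)[of a b] by (simp add: min_def max_def split: if_splits)
    qed
    have "ominus01 (g x) (g y) \<le> betaS T dA d x y" unfolding betaS_def alphaS_def
    proof (rule sup01_ge[of _ _ 1])
      show "ominus01 (g x) (g y) \<in> {ominus01 (g x) (g y) |g. g \<in> loS T dA (gammaS d)}"
        using gl by blast
      fix u assume "u \<in> {ominus01 (g x) (g y) |g. g \<in> loS T dA (gammaS d)}"
      then obtain g' where u: "u = ominus01 (g' x) (g' y)" and g': "g' \<in> loS T dA (gammaS d)" by blast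
      have "0 \<le> g' x \<and> g' x \<le> 1" "0 \<le> g' y \<and> g' y \<le> 1" using loS_bounds[OF dA d0 g'] by blast+
      thus "u \<le> 1" unfolding u ominus01_def by simp
    qed
    moreover have "t \<le> ominus01 (g x) (g y)" using gx gy unfolding ominus01_def by simp
    ultimately show "t \<le> betaS T dA d x y" by linarith
  qed
qed

lemma beta_eq_HH:
  assumes dA: "metric01 dA" and d: "d \<in> DPMet"
  shows "betaS T dA d x y = HH T dA d x y"
proof -
  have db: "\<forall>x y. 0 \<le> d x y \<and> d x y \<le> 1" using d unfolding DPMet_def by blast
  show ?thesis using beta_le_HH[OF dA db] HH_le_beta[OF dA d] by (intro antisym)
qed

lemma beta_ge:
  assumes dA: "metric01 dA" and d0: "\<forall>x y. 0 \<le> d x y" and gl: "g \<in> loS T dA (gammaS d)"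
  shows "ominus01 (g x) (g y) \<le> betaS T dA d x y" unfolding betaS_def alphaS_def
proof (rule sup01_ge[of _ _ 1])
  show "ominus01 (g x) (g y) \<in> {ominus01 (g x) (g y) |g. g \<in> loS T dA (gammaS d)}"
    using gl by blast
  fix u assume "u \<in> {ominus01 (g x) (g y) |g. g \<in> loS T dA (gammaS d)}"
  then obtain g' where u: "u = ominus01 (g' x) (g' y)" and g': "g' \<in> loS T dA (gammaS d)" by blast
  have "0 \<le> g' x \<and> g' x \<le> 1" "0 \<le> g' y \<and> g' y \<le> 1" using loS_bounds[OF dA d0 g'] by blast+
  thus "u \<le> 1" unfolding u ominus01_def by simp
qed

lemma beta_DPMet:
  assumes dA: "metric01 dA" and d0: "\<forall>x y. 0 \<le> d x y"
  shows "betaS T dA d \<in> DPMet"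
  unfolding DPMet_def
proof (intro CollectI conjI allI)
  fix x y show "0 \<le> betaS T dA d x y" "betaS T dA d x y \<le> 1" using beta_bounds[OF dA d0] by blast+
next
  fix x show "betaS T dA d x x = 0"
  proof (rule antisym)
    show "0 \<le> betaS T dA d x x" using beta_bounds[OF dA d0] by blast
    show "betaS T dA d x x \<le> 0" unfolding betaS_def alphaS_def
      by (rule sup01_le) (auto simp: ominus01_def)
  qed
next
  fix x y z
  have A0: "0 \<le> betaS T dA d x y" "0 \<le> betaS T dA d y z" using beta_bounds[OF dA d0] by blast+
  have eq: "betaS T dA d x z = sup01 {ominus01 (g x) (g z) |g. g \<in> loS T dA (gammaS d)}"
    unfolding betaS_def alphaS_def by simp
  have "sup01 {ominus01 (g x) (g z) |g. g \<in> loS T dA (gammaS d)}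
      \<le> min (betaS T dA d x y + betaS T dA d y z) 1"
  proof (rule sup01_le)
    show "0 \<le> min (betaS T dA d x y + betaS T dA d y z) 1" using A0 by simp
    fix t assume "t \<in> {ominus01 (g x) (g z) |g. g \<in> loS T dA (gammaS d)}"
    then obtain g where t: "t = ominus01 (g x) (g z)" and g: "g \<in> loS T dA (gammaS d)" by blast
    have "0 \<le> g x \<and> g x \<le> 1" "0 \<le> g z \<and> g z \<le> 1" using loS_bounds[OF dA d0 g] by blast+
    moreover have "ominus01 (g x) (g y) \<le> betaS T dA d x y" "ominus01 (g y) (g z) \<le> betaS T dA d y z"
      using beta_ge[OF dA d0 g] by blast+
    ultimately show "t \<le> min (betaS T dA d x y + betaS T dA d y z) 1"
      unfolding t ominus01_def by (simp add: max_def split: if_splits)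
  qed
  thus "betaS T dA d x z \<le> oplus01 (betaS T dA d x y) (betaS T dA d y z)"
    unfolding eq oplus01_def .
qed

lemma HH_shift:
  assumes dA: "metric01 dA" and d1: "\<forall>x y. 0 \<le> d1 x y \<and> d1 x y \<le> 1"
    and d2: "\<forall>x y. 0 \<le> d2 x y \<and> d2 x y \<le> 1" and e: "0 \<le> e"
    and le: "\<And>a x' b y'. (x, a, x') \<in> T \<Longrightarrow> (y, b, y') \<in> T \<Longrightarrow> d1 x' y' \<le> d2 x' y' + e"
  shows "HH T dA d1 x y \<le> HH T dA d2 x y + e"
proof -
  have H0: "0 \<le> HH T dA d2 x y" using HH_bounds[OF dA d2] by blast
  have dAf: "\<And>a b. 0 \<le> dA a b \<and> dA a b \<le> 1" using dA unfolding metric01_def by blast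
  show ?thesis unfolding HH_def[of T dA d1]
  proof (rule sup01_le)
    show "0 \<le> HH T dA d2 x y + e" using H0 e by simp
    fix t assume "t \<in> {inf01 {max (dA a b) (d1 x' y') | b y'. (b, y') \<in> delta T y}
                     | a x'. (a, x') \<in> delta T x}"
    then obtain a x' where t: "t = inf01 {max (dA a b) (d1 x' y') | b y'. (b, y') \<in> delta T y}"
      and ax: "(x, a, x') \<in> T" unfolding delta_def by blast
    define I2 where "I2 = inf01 {max (dA a b) (d2 x' y') | b y'. (b, y') \<in> delta T y}"
    have "I2 \<le> HH T dA d2 x y" unfolding HH_def
    proof (rule sup01_ge[of _ _ 1])
      show "I2 \<in> {inf01 {max (dA a b) (d2 x' y') | b y'. (b, y') \<in> delta T y}
                   | a x'. (a, x') \<in> delta T x}" unfolding I2_def using ax by (auto simp: delta_def)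
      fix t assume "t \<in> {inf01 {max (dA a b) (d2 x' y') | b y'. (b, y') \<in> delta T y}
                   | a x'. (a, x') \<in> delta T x}"
      then obtain a' x'' where "t = inf01 {max (dA a' b) (d2 x'' y') | b y'. (b, y') \<in> delta T y}"
        by blast
      thus "t \<le> 1" using II_bounds[OF dA d2, where T=T and y=y and a=a' and x'=x''] by simp
    qed
    moreover have "t - e \<le> I2" unfolding I2_def
    proof (rule inf01_ge)
      show "t - e \<le> 1" using II_bounds[OF dA d1, where T=T and y=y and a=a and x'=x'] e unfolding t by simp
      fix u assume "u \<in> {max (dA a b) (d2 x' y') | b y'. (b, y') \<in> delta T y}"
      then obtain b y' where u: "u = max (dA a b) (d2 x' y')" and yb: "(y, b, y') \<in> T"
        unfolding delta_def by blast
      have "t \<le> max (dA a b) (d1 x' y')" unfolding t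
      proof (rule inf01_le[of _ _ 0])
        show "max (dA a b) (d1 x' y') \<in> {max (dA a b) (d1 x' y') | b y'. (b, y') \<in> delta T y}"
          using yb unfolding delta_def by blast
        fix u assume "u \<in> {max (dA a b) (d1 x' y') | b y'. (b, y') \<in> delta T y}"
        then obtain b' y'' where "u = max (dA a b') (d1 x' y'')" by blast
        thus "0 \<le> u" using dAf[of a b'] by (simp add: le_max_iff_disj)
      qed
      moreover have "d1 x' y' \<le> d2 x' y' + e" using le[OF ax yb] .
      ultimately show "t - e \<le> u" unfolding u using e by (simp add: max_def split: if_splits)
    qed
    ultimately show "t \<le> HH T dA d2 x y + e" by linarith
  qed
qed

lemma chain_max:
  fixes E :: "('x \<Rightarrow> 'x \<Rightarrow> real) set"
  assumes "finite E" "E \<noteq> {}" "\<forall>d1\<in>E. \<forall>d2\<in>E. d1 \<le> d2 \<or> d2 \<le> d1"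
  shows "\<exists>e\<in>E. \<forall>e'\<in>E. e' \<le> e"
  using assms
proof (induction E rule: finite_ne_induct)
  case (singleton x) thus ?case by simp
next
  case (insert x F)
  then obtain e where e: "e \<in> F" "\<forall>e'\<in>F. e' \<le> e" by auto
  have "x \<le> e \<or> e \<le> x" using insert.prems e(1) by blast
  thus ?case
  proof
    assume "x \<le> e" thus ?thesis using e by blast
  next
    assume "e \<le> x" thus ?thesis using e order_trans by blast
  qed
qed

lemma fle: "(d::'x \<Rightarrow> 'x \<Rightarrow> real) \<le> s \<Longrightarrow> d p q \<le> s p q"
  by (simp add: le_fun_def)

lemma DPMet_D: "d \<in> DPMet \<Longrightarrow> \<forall>x y. 0 \<le> d x y \<and> d x y \<le> 1"
  unfolding DPMet_def by blast

lemma continuity: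
  fixes T :: "('x \<times> 'a \<times> 'x) set" and dA :: "'a \<Rightarrow> 'a \<Rightarrow> real"
  assumes dA: "metric01 dA" and fbr: "finitely_branching T"
  shows "continuous_DPMet (betaS T dA)"
  unfolding continuous_DPMet_def
proof (intro allI impI)
  fix D :: "('x \<Rightarrow> 'x \<Rightarrow> real) set" and s assume "D \<noteq> {} \<and> D \<subseteq> DPMet \<and> well_ordered_chain D \<and> is_lub_in DPMet D s"
  hence Dne: "D \<noteq> {}" and DD: "D \<subseteq> DPMet" and ch: "\<forall>d1\<in>D. \<forall>d2\<in>D. d1 \<le> d2 \<or> d2 \<le> d1"
    and sD: "s \<in> DPMet" and ub: "\<forall>d\<in>D. d \<le> s"
    and least: "\<forall>u\<in>DPMet. (\<forall>d\<in>D. d \<le> u) \<longrightarrow> s \<le> u"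
    unfolding well_ordered_chain_def is_lub_in_def by blast+
  have sb: "\<forall>x y. 0 \<le> s x y \<and> s x y \<le> 1" using DPMet_D[OF sD] .
  have s0: "\<forall>x y. 0 \<le> s x y" using sb by blast
  have Db: "\<forall>x y. 0 \<le> d x y \<and> d x y \<le> 1" if "d \<in> D" for d using DPMet_D that DD by blast
  obtain d0 where d0: "d0 \<in> D" using Dne by blast
  define S where "S = (\<lambda>p q. Sup {d p q | d. d \<in> D})"
  have bdd: "bdd_above {d p q | d. d \<in> D}" for p q
    by (rule bdd_aboveI[of _ 1]) (use Db in auto)
  have ne: "{d p q | d. d \<in> D} \<noteq> {}" for p q using d0 by blast
  have Sup_ge: "d p q \<le> S p q" if "d \<in> D" for d p q
    unfolding S_def by (rule cSup_upper) (use that bdd in auto)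
  have Sup_le: "S p q \<le> c" if "\<And>d. d \<in> D \<Longrightarrow> d p q \<le> c" for p q c
    unfolding S_def by (rule cSup_least) (use that ne in auto)
  have SD: "S \<in> DPMet" unfolding DPMet_def
  proof (intro CollectI conjI allI)
    fix x y
    have "0 \<le> d0 x y" using Db[OF d0] by blast
    thus "0 \<le> S x y" using Sup_ge[OF d0, of x y] by linarith
    show "S x y \<le> 1" by (rule Sup_le) (use Db in blast)
  next
    fix x
    have "S x x \<le> 0" by (rule Sup_le) (use DD in \<open>auto simp: DPMet_def\<close>)
    moreover have "0 \<le> S x x"
    proof -
      have "0 \<le> d0 x x" using Db[OF d0] by blast
      thus ?thesis using Sup_ge[OF d0, of x x] by linarith
    qed
    ultimately show "S x x = 0" by simp
  next
    fix x y z
    show "S x z \<le> oplus01 (S x y) (S y z)" unfolding oplus01_def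
    proof (rule Sup_le)
      fix d assume dD: "d \<in> D"
      have "d x z \<le> oplus01 (d x y) (d y z)" using DD dD unfolding DPMet_def by blast
      moreover have "d x y \<le> S x y" "d y z \<le> S y z" using Sup_ge[OF dD] by blast+
      ultimately show "d x z \<le> min (S x y + S y z) 1" unfolding oplus01_def by simp
    qed
  qed
  have sS: "s \<le> S" using least SD Sup_ge by (simp add: le_fun_def)
  show "is_lub_in DPMet (betaS T dA ` D) (betaS T dA s)"
    unfolding is_lub_in_def
  proof (intro conjI ballI impI)
    show "betaS T dA s \<in> DPMet" by (rule beta_DPMet[OF dA s0])
  next
    fix e assume "e \<in> betaS T dA ` D"
    then obtain d where e: "e = betaS T dA d" and dD: "d \<in> D" by blast
    show "e \<le> betaS T dA s" unfolding e le_fun_def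
    proof (intro allI)
      fix x y
      have "HH T dA d x y \<le> HH T dA s x y + 0"
        by (rule HH_shift[OF dA Db[OF dD] sb]) (use fle[OF bspec[OF ub dD]] in simp_all)
      moreover have "d \<in> DPMet" using DD dD by blast
      ultimately show "betaS T dA d x y \<le> betaS T dA s x y"
        using beta_eq_HH[OF dA, of d T x y] beta_eq_HH[OF dA sD, of T x y] by simp
    qed
  next
    fix u assume uD: "u \<in> DPMet" and uub: "\<forall>e\<in>betaS T dA ` D. e \<le> u"
    show "betaS T dA s \<le> u" unfolding le_fun_def
    proof (intro allI)
      fix x y
      show "betaS T dA s x y \<le> u x y"
      proof (rule field_le_epsilon)
        fix ep :: real assume ep: "0 < ep"
        define P where "P = (snd ` delta T x) \<times> (snd ` delta T y)"
        have Pf: "finite P" unfolding P_def using fbr unfolding finitely_branching_def by blast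
        have "\<forall>p\<in>P. \<exists>d. d \<in> D \<and> S (fst p) (snd p) - ep < d (fst p) (snd p)"
        proof
          fix p assume "p \<in> P"
          have "S (fst p) (snd p) - ep < Sup {d (fst p) (snd p) | d. d \<in> D}"
            using ep unfolding S_def by simp
          from less_cSupD[OF ne this] show "\<exists>d. d \<in> D \<and> S (fst p) (snd p) - ep < d (fst p) (snd p)"
            by blast
        qed
        from bchoice[OF this] obtain dd where dd: "\<forall>p\<in>P. dd p \<in> D \<and> S (fst p) (snd p) - ep < dd p (fst p) (snd p)"
          by blast
        define E where "E = insert d0 (dd ` P)"
        have ED: "E \<subseteq> D" unfolding E_def using d0 dd by blast
        have "\<exists>e\<in>E. \<forall>e'\<in>E. e' \<le> e"
        proof (rule chain_max)
          show "finite E" unfolding E_def using Pf by blast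
          show "E \<noteq> {}" unfolding E_def by blast
          show "\<forall>d1\<in>E. \<forall>d2\<in>E. d1 \<le> d2 \<or> d2 \<le> d1" using ch ED by blast
        qed
        then obtain e where eE: "e \<in> E" and emax: "\<forall>e'\<in>E. e' \<le> e" by blast
        have eD: "e \<in> D" using eE ED by blast
        have "HH T dA s x y \<le> HH T dA e x y + ep"
        proof (rule HH_shift[OF dA sb Db[OF eD]])
          show "0 \<le> ep" using ep by simp
          fix a x' b y' assume ax: "(x, a, x') \<in> T" and yb: "(y, b, y') \<in> T"
          have pP: "(x', y') \<in> P" unfolding P_def delta_def using ax yb by force
          have "s x' y' \<le> S x' y'" using fle[OF sS] .
          moreover have "S x' y' - ep < dd (x', y') x' y'" using dd pP by auto
          moreover have "dd (x', y') \<le> e" using emax pP unfolding E_def by blast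
          ultimately show "s x' y' \<le> e x' y' + ep" using fle[of "dd (x', y')" e x' y'] by linarith
        qed
        moreover have "betaS T dA e x y \<le> u x y"
        proof -
          have "betaS T dA e \<le> u" using uub eD by blast
          thus ?thesis by (rule fle)
        qed
        moreover have "e \<in> DPMet" using DD eD by blast
        ultimately show "betaS T dA s x y \<le> u x y + ep"
          using beta_eq_HH[OF dA, of e T x y] beta_eq_HH[OF dA sD, of T x y] by simp
      qed
    qed
  qed
qed

theorem mainTheorem6:
  fixes T :: "('x \<times> 'a \<times> 'x) set" and dA :: "'a \<Rightarrow> 'a \<Rightarrow> real"
  assumes "metric01 dA"
  shows "(\<forall>d \<in> DPMet. \<forall>x y.
            betaS T dA d x y =
              sup01 {inf01 {max (dA a b) (d x' y') | b y'. (b, y') \<in> delta T y}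
                     | a x'. (a, x') \<in> delta T x})
       \<and> (finitely_branching T \<longrightarrow> continuous_DPMet (betaS T dA))"
proof (intro conjI ballI allI impI)
  fix d :: "'x \<Rightarrow> 'x \<Rightarrow> real" and x y :: 'x assume dM: "d \<in> DPMet"
  show "betaS T dA d x y =
              sup01 {inf01 {max (dA a b) (d x' y') | b y'. (b, y') \<in> delta T y}
                     | a x'. (a, x') \<in> delta T x}" using beta_eq_HH[OF assms dM, of T x y] unfolding HH_def .
next
  assume "finitely_branching T"
  from continuity[OF assms this] show "continuous_DPMet (betaS T dA)" .
qed

end
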